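(* For all integers $n\geq 0$, $k\geq 1$ and $i\geq 0$, \begin{align*} \bar a_{2^ki+\frac{2^k-6}{2}}(8n+7)&\equiv 0 \pmod{2^{k+3}},\\ \bar a_{2^ki+\frac{2^k-2}{2}}(8n+7)&\equiv 0 \pmod{2^{k+3}}. \end{align*}
   Context: For an integer $k\geq 1$ let $f_k:=\prod_{n\geq 1}(1-q^{kn})$. For an integer $c$, $\bar a_c(n)$ denotes the coefficient of $q^n$ in the power series $\dfrac{f_4^{c-1}}{f_1^2f_2^{2c-3}}$, i.e. $\sum_{n\geq 0}\bar a_c(n)q^n=\dfrac{f_4^{c-1}}{f_1^2f_2^{2c-3}}$ (for $c\geq1$ these are the generalized overcubic partition numbers). *)

theory Defs
  imports "HOL-Computational_Algebra.Formal_Power_Series"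
begin

(* f_k = prod_{m>=1} (1 - q^(k m)), as a formal power series over the rationals.
   The coefficient of q^n of the infinite product equals that of the finite
   product over m = 1..n (for k >= 1, later factors are 1 + O(q^(n+1))). *)
definition eta_f :: "nat \<Rightarrow> rat fps" where
  "eta_f k = Abs_fps (\<lambda>n. fps_nth (\<Prod>m\<in>{1..n}. (1 - fps_X ^ (k * m))) n)"

definition fps_pow_int :: "rat fps \<Rightarrow> int \<Rightarrow> rat fps" where
  "fps_pow_int F e = (if 0 \<le> e then F ^ nat e else inverse F ^ nat (- e))"

definition abar :: "int \<Rightarrow> nat \<Rightarrow> rat" where
  "abar c n = fps_nth (fps_pow_int (eta_f 4) (c - 1) * fps_pow_int (eta_f 1) (-2)
                       * fps_pow_int (eta_f 2) (-(2 * c - 3))) n"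

end

theory Submission
  imports Defs
begin

unbundle fps_syntax

definition PP :: "nat \<Rightarrow> nat \<Rightarrow> rat fps" where
  "PP k M = (\<Prod>m\<in>{1..M}. (1 - fps_X ^ (k*m)))"

definition eqm :: "nat \<Rightarrow> rat fps \<Rightarrow> rat fps \<Rightarrow> bool" where
  "eqm N F G \<longleftrightarrow> (\<forall>i\<le>N. F $ i = G $ i)"

lemma eqm_refl[simp]: "eqm N F F" by (simp add: eqm_def)
lemma eqm_sym: "eqm N F G \<Longrightarrow> eqm N G F" by (simp add: eqm_def)
lemma eqm_trans[trans]: "eqm N F G \<Longrightarrow> eqm N G H \<Longrightarrow> eqm N F H" by (simp add: eqm_def)

lemma eqm_mult: assumes "eqm N F G" "eqm N F' G'" shows "eqm N (F*F') (G*G')"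
  unfolding eqm_def
proof (intro allI impI)
  fix i assume i: "i \<le> N"
  show "(F*F') $ i = (G*G') $ i" unfolding fps_mult_nth
    using assms i by (intro sum.cong) (auto simp: eqm_def)
qed

lemma eqm_add: assumes "eqm N F G" "eqm N F' G'" shows "eqm N (F+F') (G+G')"
  using assms by (simp add: eqm_def)

lemma eqm_sum: assumes "\<And>s. s \<in> S \<Longrightarrow> eqm N (f s) (g s)" shows "eqm N (\<Sum>s\<in>S. f s) (\<Sum>s\<in>S. g s)"
  using assms by (auto simp: eqm_def fps_sum_nth intro!: sum.cong)

lemma eqm_power: assumes "eqm N F G" shows "eqm N (F^n) (G^n)"
  by (induction n) (auto intro: eqm_mult assms)

lemma eqm_cmult: assumes "eqm N F G" shows "eqm N (A*F) (A*G)"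
  by (rule eqm_mult[OF eqm_refl assms])

lemma eqm_Xpow: assumes "N < e" shows "eqm N (fps_X ^ e * F) 0"
  using assms by (auto simp: eqm_def fps_X_power_mult_nth)

lemma eqm_all: assumes "\<And>N. eqm N F G" shows "F = G"
  using assms by (auto simp: eqm_def fps_eq_iff)

lemma prod_tail_form:
  assumes "finite S" "\<And>m. m \<in> S \<Longrightarrow> e m > n"
  shows "\<exists>R. (\<Prod>m\<in>S. (1 - fps_X ^ e m :: rat fps)) = 1 + fps_X^(Suc n) * R"
  using assms
proof (induction S rule: finite_induct)
  case empty then show ?case by (intro exI[of _ 0]) simp
next
  case (insert x S)
  then obtain R where R: "(\<Prod>m\<in>S. (1 - fps_X ^ e m :: rat fps)) = 1 + fps_X^(Suc n) * R" by auto
  have "e x > n" using insert.prems by auto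
  then have ex: "e x = Suc n + (e x - Suc n)" by arith
  have "(\<Prod>m\<in>insert x S. (1 - fps_X ^ e m :: rat fps)) = (1 - fps_X ^ e x) * (1 + fps_X^(Suc n) * R)"
    using insert R by simp
  also have "\<dots> = 1 + fps_X^(Suc n) * (R - fps_X^(e x - Suc n) - fps_X^(e x - Suc n) * fps_X^(Suc n) * R)"
    by (subst ex, simp only: power_add) (simp add: algebra_simps)
  finally show ?case by blast
qed

lemma nth_one_plus_tail: "n \<le> N' \<Longrightarrow> ((A::rat fps) * (1 + fps_X^(Suc N') * R)) $ n = A $ n"
proof -
  assume n: "n \<le> N'"
  have "(fps_X^(Suc N') * (A*R)) $ n = 0" unfolding fps_X_power_mult_nth using n by simp
  then show ?thesis by (simp only: distrib_left mult.left_commute[of A] mult_1_right fps_add_nth)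
qed

lemma PP_tail: assumes "k \<ge> 1" "n \<le> M" shows "PP k M $ n = PP k n $ n"
proof -
  have split: "{1..M} = {1..n} \<union> {Suc n..M}" using assms by auto
  have "PP k M = PP k n * (\<Prod>m\<in>{Suc n..M}. (1 - fps_X ^ (k*m)))"
    unfolding PP_def split by (subst prod.union_disjoint) auto
  moreover obtain R where "(\<Prod>m\<in>{Suc n..M}. (1 - fps_X ^ (k*m) :: rat fps)) = 1 + fps_X^(Suc n) * R"
  proof -
    have hm: "n < k*m" if "m \<in> {Suc n..M}" for m
    proof -
      have "Suc n \<le> m" using that by simp
      moreover have "m \<le> k*m" using assms(1) by simp
      ultimately show ?thesis by linarith
    qed
    show ?thesis using prod_tail_form[of "{Suc n..M}" n "\<lambda>m. k*m", OF _ hm] that by auto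
  qed
  ultimately show ?thesis using nth_one_plus_tail by simp
qed

lemma eta_nth: assumes "k \<ge> 1" "n \<le> M" shows "eta_f k $ n = PP k M $ n"
  using PP_tail[OF assms] by (simp add: eta_f_def PP_def)

lemma eta_eqm: assumes "k \<ge> 1" "N \<le> M" shows "eqm N (eta_f k) (PP k M)"
  unfolding eqm_def proof (intro allI impI)
  fix i assume "i \<le> N" then show "eta_f k $ i = PP k M $ i" by (intro eta_nth[OF assms(1)]) (use \<open>i \<le> N\<close> assms(2) in simp)
qed

lemma PP_Suc: "PP k (Suc M) = PP k M * (1 - fps_X^(k * Suc M))"
  by (simp add: PP_def)

lemma PP_0[simp]: "PP k 0 = 1" by (simp add: PP_def)

lemma eta_0: "eta_f k $ 0 = 1" by (simp add: eta_f_def)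


definition ngt :: "rat fps \<Rightarrow> rat fps" where "ngt F = F oo (- fps_X)"
definition dil :: "rat fps \<Rightarrow> rat fps" where "dil F = F oo (fps_X ^ 2)"

lemma negX_pow: "(- fps_X :: rat fps) ^ i = fps_const ((-1)^i) * fps_X ^ i"
  apply (induction i) apply simp
  apply (simp only: power_Suc)
  apply (simp add: fps_const_neg[symmetric] fps_const_mult[symmetric] del: fps_const_neg fps_const_mult)
  done

lemma ngt_nth: "ngt F $ n = (-1)^n * F $ n"
proof -
  have "ngt F $ n = (\<Sum>i=0..n. F $ i * ((- fps_X :: rat fps) ^ i $ n))"
    unfolding ngt_def fps_compose_nth ..
  also have "\<dots> = (\<Sum>i=0..n. if i = n then (-1)^n * F $ n else 0)"
    by (intro sum.cong refl) (simp only: negX_pow fps_const_mult_left fps_X_power_nth, auto)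
  also have "\<dots> = (-1)^n * F $ n" by simp
  finally show ?thesis .
qed

lemma dil_nth: "dil F $ n = (if even n then F $ (n div 2) else 0)"
proof -
  have "dil F $ n = (\<Sum>i=0..n. F $ i * ((fps_X ^ 2 :: rat fps) ^ i $ n))"
    unfolding dil_def fps_compose_nth ..
  also have "\<dots> = (\<Sum>i=0..n. if n = 2 * i then F $ (n div 2) else 0)"
    by (intro sum.cong refl) (simp add: power_mult[symmetric])
  also have "\<dots> = (if even n then F $ (n div 2) else 0)"
  proof (cases "even n")
    case True
    then have "(\<Sum>i=0..n. if n = 2 * i then F $ (n div 2) else 0) = (\<Sum>i\<in>{n div 2}. F $ (n div 2))"
      by (intro sum.mono_neutral_cong_right) auto
    then show ?thesis using True by simp
  next
    case False then show ?thesis by (auto intro!: sum.neutral)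
  qed
  finally show ?thesis .
qed

lemma ngt_mult: "ngt (F * G) = ngt F * ngt G"
  unfolding ngt_def by (rule fps_compose_mult_distrib) simp
lemma dil_mult: "dil (F * G) = dil F * dil G"
  unfolding dil_def by (rule fps_compose_mult_distrib) simp
lemma ngt_power: "ngt (F ^ n) = ngt F ^ n"
  unfolding ngt_def by (rule fps_compose_power[symmetric]) simp
lemma dil_power: "dil (F ^ n) = dil F ^ n"
  unfolding dil_def by (rule fps_compose_power[symmetric]) simp
lemma ngt_inverse: "F $ 0 \<noteq> 0 \<Longrightarrow> ngt (inverse F) = inverse (ngt F)"
  unfolding ngt_def by (rule fps_inverse_compose) simp_all
lemma dil_inverse: "F $ 0 \<noteq> 0 \<Longrightarrow> dil (inverse F) = inverse (dil F)"
  unfolding dil_def by (rule fps_inverse_compose) simp_all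
lemma ngt_1[simp]: "ngt 1 = 1" by (simp add: ngt_def)
lemma ngt_0[simp]: "ngt F $ 0 = F $ 0" by (simp add: ngt_nth)
lemma dil_0[simp]: "dil F $ 0 = F $ 0" by (simp add: dil_nth)

lemma ngt_Xpow: "ngt (1 - fps_X ^ j) = 1 - (- fps_X) ^ j"
  unfolding ngt_def by (simp add: fps_compose_sub_distrib fps_compose_power[symmetric])
lemma dil_Xpow: "dil (1 - fps_X ^ j) = 1 - fps_X ^ (2*j)"
  unfolding dil_def by (simp add: fps_compose_sub_distrib fps_compose_power[symmetric] power_mult)

lemma dil_PP: "dil (PP k M) = PP (2*k) M"
  unfolding PP_def dil_def
  by (simp add: fps_compose_prod_distrib dil_Xpow[unfolded dil_def] mult.assoc)

lemma ngt_PP: "ngt (PP k M) = (\<Prod>m\<in>{1..M}. (1 - (- fps_X) ^ (k*m)))"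
  unfolding PP_def ngt_def
  by (simp add: fps_compose_prod_distrib ngt_Xpow[unfolded ngt_def])

lemma eqm_ngt: "eqm N F G \<Longrightarrow> eqm N (ngt F) (ngt G)"
  by (simp add: eqm_def ngt_nth)

lemma dil_eta: assumes "k \<ge> 1" shows "dil (eta_f k) = eta_f (2*k)"
proof (rule fps_ext)
  fix n
  have "eta_f (2*k) $ n = PP (2*k) n $ n" using eta_nth[of "2*k" n n] assms by simp
  also have "\<dots> = dil (PP k n) $ n" by (simp add: dil_PP)
  also have "\<dots> = dil (eta_f k) $ n"
    unfolding dil_nth using eta_nth[OF assms, of "n div 2" n] by simp
  finally show "dil (eta_f k) $ n = eta_f (2*k) $ n" ..
qed

lemma ngt_dil: "ngt (dil F) = dil F"
  by (rule fps_ext) (auto simp: ngt_nth dil_nth)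

lemma prod_Suc1: "(\<Prod>m\<in>{1..Suc M}. f m) = (\<Prod>m\<in>{1..M}. f m) * (f (Suc M) :: 'a::comm_monoid_mult)"
  by (simp add: mult.commute)

lemma ring_aux_II:
  fixes n p p4 p2 p22 x z w :: "'a::comm_ring_1"
  assumes "n*p*p4 = p2^2*p22"
  shows "(n*(1+x)*(1-z))*(p*(1-x)*(1-z))*(p4*(1-w)) = (p2*(1-z))^2*(p22*(1-x*x)*(1-w))"
proof -
  have "(n*(1+x)*(1-z))*(p*(1-x)*(1-z))*(p4*(1-w)) = (n*p*p4)*(((1+x)*(1-x))*(1-z)*(1-z)*(1-w))"
    by (simp only: mult_ac)
  also have "(1+x)*(1-x) = 1 - x*x" by (simp add: algebra_simps)
  also have "(n*p*p4)*((1 - x*x)*(1-z)*(1-z)*(1-w)) = (p2*(1-z))^2*(p22*(1-x*x)*(1-w))"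
    unfolding assms by (simp only: power2_eq_square mult_ac)
  finally show ?thesis .
qed

lemma finite_II: "ngt (PP 1 (2*M)) * PP 1 (2*M) * PP 4 M = PP 2 M ^ 2 * PP 2 (2*M)"
proof (induction M)
  case 0 then show ?case by simp
next
  case (Suc M)
  have e1: "2 * Suc M = Suc (Suc (2*M))" by simp
  have a: "ngt (PP 1 (2 * Suc M)) = ngt (PP 1 (2*M)) * (1 + fps_X^(2*M+1)) * (1 - fps_X^(2*M+2))"
  proof -
    have hodd: "(- (fps_X::rat fps))^(2*M+1) = - (fps_X^(2*M+1))" by (simp add: power_minus_odd)
    have ev: "(- (fps_X::rat fps))^(2*M+2) = fps_X^(2*M+2)" by (simp add: power_minus_even)
    have "ngt (PP 1 (2 * Suc M)) = ngt (PP 1 (2*M)) * (1 - (- fps_X)^(2*M+1)) * (1 - (- fps_X)^(2*M+2))"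
      unfolding e1 ngt_PP prod_Suc1 by (simp only: mult_1 Suc_eq_plus1 add.assoc one_add_one)
    then show ?thesis unfolding hodd ev by simp
  qed
  have b: "PP 1 (2 * Suc M) = PP 1 (2*M) * (1 - fps_X^(2*M+1)) * (1 - fps_X^(2*M+2))"
    unfolding e1 PP_Suc by (simp only: mult_1 Suc_eq_plus1 add.assoc one_add_one)
  have c: "PP 2 (2 * Suc M) = PP 2 (2*M) * (1 - fps_X^(4*M+2)) * (1 - fps_X^(4*M+4))"
  proof -
    have "2 * Suc (2*M) = 4*M+2" "2 * Suc (Suc (2*M)) = 4*M+4" by simp_all
    then show ?thesis unfolding e1 PP_Suc by (simp only:)
  qed
  have d: "PP 4 (Suc M) = PP 4 M * (1 - fps_X^(4*M+4))"
  proof -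
    have "4 * Suc M = 4*M+4" by simp
    then show ?thesis unfolding PP_Suc by (simp only:)
  qed
  have f: "PP 2 (Suc M) = PP 2 M * (1 - fps_X^(2*M+2))"
  proof -
    have "2 * Suc M = 2*M+2" by simp
    then show ?thesis unfolding PP_Suc by (simp only:)
  qed
  have g: "(fps_X::rat fps)^(4*M+2) = fps_X^(2*M+1) * fps_X^(2*M+1)"
    by (simp add: power_add[symmetric])
  let ?x = "fps_X^(2*M+1) :: rat fps" and ?z = "fps_X^(2*M+2) :: rat fps" and ?w = "fps_X^(4*M+4) :: rat fps"
  have "ngt (PP 1 (2*Suc M)) * PP 1 (2*Suc M) * PP 4 (Suc M) =
     (ngt (PP 1 (2*M)) * (1 + ?x) * (1 - ?z)) * (PP 1 (2*M) * (1 - ?x) * (1 - ?z)) * (PP 4 M * (1 - ?w))"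
    by (subst a, subst b, subst d, rule refl)
  also have "\<dots> = (PP 2 M * (1 - ?z))^2 * (PP 2 (2*M) * (1 - ?x * ?x) * (1 - ?w))"
    by (rule ring_aux_II[OF Suc.IH])
  also have "\<dots> = PP 2 (Suc M) ^ 2 * PP 2 (2 * Suc M)"
    by (subst f, subst c, subst g, rule refl)
  finally show ?case .
qed


lemma PP_nth0: assumes "k \<ge> 1" shows "PP k M $ 0 = 1"
proof (induction M)
  case 0 then show ?case by simp
next
  case (Suc M)
  have "k * Suc M \<noteq> 0" using assms by simp
  then show ?case using Suc by (simp add: PP_Suc)
qed

lemma eta_II: "ngt (eta_f 1) * eta_f 1 * eta_f 4 = eta_f 2 ^ 3"
proof (rule eqm_all)
  fix N
  have "eqm N (ngt (eta_f 1) * eta_f 1 * eta_f 4) (ngt (PP 1 (2*N)) * PP 1 (2*N) * PP 4 N)"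
    by (intro eqm_mult eqm_ngt eta_eqm) auto
  also have "ngt (PP 1 (2*N)) * PP 1 (2*N) * PP 4 N = PP 2 N ^ 2 * PP 2 (2*N)" by (rule finite_II)
  also have "eqm N (PP 2 N ^ 2 * PP 2 (2*N)) (eta_f 2 ^ 2 * eta_f 2)"
    by (intro eqm_mult eqm_power eqm_sym[OF eta_eqm]) auto
  also have "eta_f 2 ^ 2 * eta_f 2 = eta_f 2 ^ 3" by (simp add: power3_eq_cube power2_eq_square)
  finally show "eqm N (ngt (eta_f 1) * eta_f 1 * eta_f 4) (eta_f 2 ^ 3)" .
qed


fun Dg :: "nat \<Rightarrow> nat \<Rightarrow> rat fps" where
  "Dg 0 s = (if s = 0 then 1 else 0)"
| "Dg (Suc n) s = Dg n s * (1 + fps_X^(4*n+2))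
     + fps_X^(2*n+1) * ((if s = 0 then Dg n 1 else Dg n (s-1)) + Dg n (s+1))"

lemma Dg_zero: "n < s \<Longrightarrow> Dg n s = 0"
  by (induction n arbitrary: s) auto

definition cs :: "nat \<Rightarrow> rat fps" where "cs s = fps_const ((-1)^s)"

lemma cs_Suc: "cs (Suc s) = - cs s" by (simp add: cs_def)

definition Tg :: "nat \<Rightarrow> rat fps" where "Tg n = (\<Sum>s\<in>{1..n}. cs s * Dg n s)"
definition Sg :: "nat \<Rightarrow> rat fps" where "Sg n = Dg n 0 + 2 * Tg n"

lemma sum_shift_down: "(\<Sum>s\<in>{1..Suc n}. cs s * Dg n (s-1)) = - (Dg n 0 + Tg n)"
proof -
  have "(\<Sum>s\<in>{1..Suc n}. cs s * Dg n (s-1)) = (\<Sum>i\<in>{0..n}. cs (Suc i) * Dg n i)"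
    unfolding One_nat_def sum.shift_bounds_cl_Suc_ivl by simp
  also have "\<dots> = - (\<Sum>i\<in>{0..n}. cs i * Dg n i)" by (simp add: cs_Suc sum_negf)
  also have "(\<Sum>i\<in>{0..n}. cs i * Dg n i) = cs 0 * Dg n 0 + (\<Sum>i\<in>{Suc 0..n}. cs i * Dg n i)"
    by (rule sum.atLeast_Suc_atMost) simp
  finally show ?thesis by (simp add: Tg_def cs_def)
qed

lemma sum_Suc1: "(\<Sum>m\<in>{1..Suc M}. f m) = (\<Sum>m\<in>{1..M}. f m) + (f (Suc M) :: 'a::comm_monoid_add)"
  by (simp add: add.commute)

lemma cs1: "cs (Suc 0) = -1"
proof -
  have "fps_const (-1::rat) = - 1" by (metis fps_const_neg fps_const_1_eq_1)
  then show ?thesis by (simp add: cs_def)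
qed

lemma sum_shift_up: "(\<Sum>s\<in>{1..Suc n}. cs s * Dg n (s+1)) = - Tg n - Dg n 1"
proof -
  have z: "Dg n (Suc n + 1) = 0" by (rule Dg_zero) simp
  have z2: "Dg n (Suc n) = 0" by (rule Dg_zero) simp
  have "(\<Sum>s\<in>{1..Suc n}. cs s * Dg n (s+1)) = (\<Sum>s\<in>{1..n}. cs s * Dg n (Suc s))"
    using z by (simp add: sum_Suc1)
  also have "\<dots> = - (\<Sum>s\<in>{1..n}. cs (Suc s) * Dg n (Suc s))"
    by (simp add: cs_Suc sum_negf)
  also have "(\<Sum>s\<in>{1..n}. cs (Suc s) * Dg n (Suc s)) = (\<Sum>t\<in>{Suc 1..Suc n}. cs t * Dg n t)"
    by (rule sum.shift_bounds_cl_Suc_ivl[symmetric])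
  also have "\<dots> = (\<Sum>t\<in>{1..Suc n}. cs t * Dg n t) - cs 1 * Dg n 1"
    by (subst sum.atLeast_Suc_atMost[of 1 "Suc n"]) simp_all
  also have "(\<Sum>t\<in>{1..Suc n}. cs t * Dg n t) = Tg n"
    using z2 by (simp add: Tg_def sum_Suc1)
  finally show ?thesis by (simp add: cs1)
qed

lemma Sg_Suc: "Sg (Suc n) = (1 - fps_X^(2*n+1))^2 * Sg n"
proof -
  let ?x = "fps_X^(2*n+1) :: rat fps" and ?y = "fps_X^(4*n+2) :: rat fps"
  have y: "?y = ?x * ?x" by (simp add: power_add[symmetric])
  have "Tg (Suc n) = (\<Sum>s\<in>{1..Suc n}. cs s * (Dg n s * (1 + ?y) + ?x * (Dg n (s-1) + Dg n (s+1))))"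
    unfolding Tg_def by (intro sum.cong refl) auto
  also have "\<dots> = (1 + ?y) * (\<Sum>s\<in>{1..Suc n}. cs s * Dg n s)
      + ?x * (\<Sum>s\<in>{1..Suc n}. cs s * Dg n (s-1)) + ?x * (\<Sum>s\<in>{1..Suc n}. cs s * Dg n (s+1))"
    by (simp add: sum.distrib sum_distrib_left algebra_simps)
  also have "(\<Sum>s\<in>{1..Suc n}. cs s * Dg n s) = Tg n" by (simp add: Tg_def Dg_zero)
  finally have T: "Tg (Suc n) = (1 + ?y) * Tg n - ?x * (Dg n 0 + Tg n) + ?x * (- Tg n - Dg n 1)"
    unfolding sum_shift_down sum_shift_up by (simp add: algebra_simps)
  have D0: "Dg (Suc n) 0 = Dg n 0 * (1 + ?y) + ?x * (Dg n 1 + Dg n 1)" by simp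
  show ?thesis unfolding Sg_def T D0 y by (simp add: algebra_simps power2_eq_square)
qed

definition Og :: "nat \<Rightarrow> rat fps" where "Og n = (\<Prod>i\<in>{1..n}. (1 - fps_X^(2*i-1)))"

lemma Sg_Og: "Sg n = Og n ^ 2"
proof (induction n)
  case 0 then show ?case by (simp add: Sg_def Tg_def Og_def)
next
  case (Suc n)
  have "Og (Suc n) = Og n * (1 - fps_X^(2*n+1))" unfolding Og_def prod_Suc1 by simp
  then show ?case using Suc by (simp add: Sg_Suc power_mult_distrib mult.commute)
qed

lemma Og_PP: "Og n * PP 2 n = PP 1 (2*n)"
proof (induction n)
  case 0 then show ?case by (simp add: Og_def)
next
  case (Suc n)
  have o: "Og (Suc n) = Og n * (1 - fps_X^(2*n+1))" unfolding Og_def prod_Suc1 by simp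
  have p2: "PP 2 (Suc n) = PP 2 n * (1 - fps_X^(2*n+2))"
  proof -
    have "2 * Suc n = 2*n+2" by simp
    then show ?thesis unfolding PP_Suc by (simp only:)
  qed
  have p1: "PP 1 (2 * Suc n) = PP 1 (2*n) * (1 - fps_X^(2*n+1)) * (1 - fps_X^(2*n+2))"
  proof -
    have e1: "2 * Suc n = Suc (Suc (2*n))" by simp
    show ?thesis unfolding e1 PP_Suc by (simp only: mult_1 Suc_eq_plus1 add.assoc one_add_one)
  qed
  show ?case unfolding o p2 p1 Suc.IH[symmetric] by (simp only: mult_ac)
qed


lemma W_Suc: "PP 2 (Suc t) = PP 2 t * (1 - fps_X^(2*t+2))"
proof -
  have "2 * Suc t = 2*t+2" by simp
  then show ?thesis unfolding PP_Suc by (simp only:)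
qed

lemma W_2: "PP 2 (t+2) = PP 2 t * (1 - fps_X^(2*t+2)) * (1 - fps_X^(2*t+4))"
proof -
  have e: "t + 2 = Suc (Suc t)" by simp
  have "2*Suc t+2 = 2*t+4" by simp
  then show ?thesis unfolding e W_Suc by (simp only:)
qed

lemma poly_id:
  fixes A B t :: "'a::comm_ring_1"
  shows "(1 - A*t)*(1 - B*t)*(1 + A*B*t) + B*t*(1-A)*(1-A*t) + A*t*(1-B)*(1-B*t)
         = (1 - A*B*t)*(1 - A*B*t*t)"
  by (simp add: algebra_simps)

lemma Xp: "(fps_X::rat fps)^a * fps_X^b = fps_X^(a+b)" by (simp add: power_add)

lemma closed_form: "s \<le> n \<Longrightarrow> Dg n s * PP 2 (n+s) * PP 2 (n-s) = fps_X^(s^2) * PP 2 (2*n)"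
proof (induction n arbitrary: s)
  case 0 then show ?case by simp
next
  case (Suc n)
  note IH = Suc.IH
  show ?case
  proof (cases "s = Suc n")
    case True
    have D: "Dg (Suc n) (Suc n) = fps_X^(2*n+1) * Dg n n"
      using Dg_zero[of n "Suc n"] Dg_zero[of n "Suc n + 1"] by simp
    have I: "Dg n n * PP 2 (2*n) = fps_X^(n^2) * PP 2 (2*n)" using IH[of n] by (simp add: mult_2)
    have W: "PP 2 (Suc n + Suc n) = PP 2 (2*n) * (1 - fps_X^(4*n+2)) * (1 - fps_X^(4*n+4))"
    proof -
      have e: "Suc n + Suc n = 2*n + 2" by simp
      have f: "2*(2*n)+2 = 4*n+2" "2*(2*n)+4 = 4*n+4" by simp_all
      show ?thesis unfolding e using W_2[of "2*n"] unfolding f .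
    qed
    have W': "PP 2 (2 * Suc n) = PP 2 (Suc n + Suc n)" by (simp add: mult_2)
    have ex: "(fps_X::rat fps)^(2*n+1) * fps_X^(n^2) = fps_X^((Suc n)^2)"
      unfolding Xp by (simp add: power2_eq_square)
    have "Dg (Suc n) s * PP 2 (Suc n + s) * PP 2 (Suc n - s)
        = fps_X^(2*n+1) * (Dg n n * PP 2 (2*n)) * ((1 - fps_X^(4*n+2)) * (1 - fps_X^(4*n+4)))"
      unfolding True D W by (simp add: mult_ac)
    also have "\<dots> = (fps_X^(2*n+1) * fps_X^(n^2)) * (PP 2 (2*n) * (1 - fps_X^(4*n+2)) * (1 - fps_X^(4*n+4)))"
      unfolding I by (simp add: mult_ac)
    also have "\<dots> = fps_X^(s^2) * PP 2 (2 * Suc n)"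
      unfolding ex W' W True ..
    finally show ?thesis .
  next
    case False
    then have sn: "s \<le> n" using Suc.prems by simp
    define A :: "rat fps" where "A = fps_X^(2*(n+s))"
    define B :: "rat fps" where "B = fps_X^(2*(n-s))"
    define t :: "rat fps" where "t = fps_X^2"
    define Dm where "Dm = (if s = 0 then Dg n 1 else Dg n (s-1))"
    let ?W = "PP 2"
    have h1: "?W (Suc n + s) = ?W (n+s) * (1 - A*t)"
      unfolding A_def t_def Xp using W_Suc[of "n+s"] by (simp add: algebra_simps)
    have h2: "?W (Suc n - s) = ?W (n-s) * (1 - B*t)"
    proof -
      have "Suc n - s = Suc (n-s)" using sn by simp
      then show ?thesis unfolding B_def t_def Xp using W_Suc[of "n-s"] by (simp add: algebra_simps)
    qed
    have h3: "fps_X^(4*n+2) = A*B*t"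
    proof -
      have "4*n+2 = 2*(n+s) + 2*(n-s) + 2" using sn by simp
      then show ?thesis unfolding A_def B_def t_def Xp by simp
    qed
    have hW: "?W (2 * Suc n) = ?W (2*n) * (1 - A*B*t) * (1 - A*B*t*t)"
    proof -
      have "2 * Suc n = 2*n+2" by simp
      moreover have "fps_X^(2*(2*n)+4) = A*B*t*t"
      proof -
        have e: "2*(2*n)+4 = 2*(n+s) + 2*(n-s) + 2 + 2" using sn by simp
        show ?thesis unfolding A_def B_def t_def e power_add ..
      qed
      moreover have "fps_X^(2*(2*n)+2) = A*B*t"
        using h3 by (simp add: algebra_simps)
      ultimately show ?thesis using W_2[of "2*n"] by simp
    qed
    have T1: "Dg n s * (1 + fps_X^(4*n+2)) * ?W (Suc n + s) * ?W (Suc n - s)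
        = fps_X^(s^2) * ?W (2*n) * ((1 - A*t)*(1 - B*t)*(1 + A*B*t))"
    proof -
      have "Dg n s * (1 + fps_X^(4*n+2)) * ?W (Suc n + s) * ?W (Suc n - s)
          = (Dg n s * ?W (n+s) * ?W (n-s)) * ((1 - A*t)*(1 - B*t)*(1 + A*B*t))"
        unfolding h1 h2 h3 by (simp only: mult_ac)
      then show ?thesis unfolding IH[OF sn] by (simp only: mult_ac)
    qed
    have T3: "fps_X^(2*n+1) * Dg n (s+1) * ?W (Suc n + s) * ?W (Suc n - s)
        = fps_X^(s^2) * ?W (2*n) * (A*t*(1-B)*(1-B*t))"
    proof (cases "s = n")
      case True
      then have "B = 1" unfolding B_def by simp
      moreover have "Dg n (s+1) = 0" using True by (intro Dg_zero) simp
      ultimately show ?thesis by simp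
    next
      case False
      then have s1: "s + 1 \<le> n" using sn by simp
      have a: "?W (Suc n + s) = ?W (n + (s+1))" by simp
      have b: "?W (Suc n - s) = ?W (n - (s+1)) * (1 - B) * (1 - B*t)"
      proof -
        have e1: "Suc n - s = (n - (s+1)) + 2" using s1 by simp
        have e2: "2*(n-(s+1))+2 = 2*(n-s)" "2*(n-(s+1))+4 = 2*(n-s)+2" using s1 by simp_all
        show ?thesis unfolding e1 W_2 e2 B_def t_def power_add ..
      qed
      have ex: "fps_X^(2*n+1) * fps_X^((s+1)^2) = fps_X^(s^2) * A * t"
      proof -
        have "2*n+1 + (s+1)^2 = s^2 + 2*(n+s) + 2" by (simp add: power2_eq_square algebra_simps)
        then show ?thesis unfolding A_def t_def Xp by simp
      qed
      have "fps_X^(2*n+1) * Dg n (s+1) * ?W (Suc n + s) * ?W (Suc n - s)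
          = fps_X^(2*n+1) * (Dg n (s+1) * ?W (n + (s+1)) * ?W (n - (s+1))) * ((1 - B) * (1 - B*t))"
        unfolding a b by (simp only: mult_ac)
      also have "\<dots> = (fps_X^(2*n+1) * fps_X^((s+1)^2)) * ?W (2*n) * ((1 - B) * (1 - B*t))"
        unfolding IH[OF s1] by (simp only: mult_ac)
      also have "\<dots> = fps_X^(s^2) * ?W (2*n) * (A*t*(1-B)*(1-B*t))"
        unfolding ex by (simp only: mult_ac)
      finally show ?thesis .
    qed
    have T2: "fps_X^(2*n+1) * Dm * ?W (Suc n + s) * ?W (Suc n - s)
        = fps_X^(s^2) * ?W (2*n) * (B*t*(1-A)*(1-A*t))"
    proof (cases "s = 0")
      case s0: True
      show ?thesis
      proof (cases "n = 0")
        case True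
        then have "A = 1" unfolding A_def using s0 by simp
        moreover have "Dm = 0" unfolding Dm_def using s0 True by simp
        ultimately show ?thesis by simp
      next
        case False
        then have n1: "1 \<le> n" by simp
        have a: "?W (Suc n + s) = ?W (n - 1) * (1 - A) * (1 - A*t)"
        proof -
          have e1: "Suc n + s = (n - 1) + 2" using s0 n1 by simp
          have e2: "2*(n-1)+2 = 2*(n+s)" "2*(n-1)+4 = 2*(n+s)+2" using s0 n1 by simp_all
          show ?thesis unfolding e1 W_2 e2 A_def t_def power_add ..
        qed
        have b: "?W (Suc n - s) = ?W (n + 1)" using s0 by simp
        have ex: "fps_X^(2*n+1) * fps_X^(1^2) = fps_X^(s^2) * B * t"
        proof -
          have "2*n+1 + 1^2 = s^2 + 2*(n-s) + 2" using s0 by simp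
          then show ?thesis unfolding B_def t_def Xp by simp
        qed
        have "fps_X^(2*n+1) * Dm * ?W (Suc n + s) * ?W (Suc n - s)
          = fps_X^(2*n+1) * (Dg n 1 * ?W (n + 1) * ?W (n - 1)) * ((1 - A) * (1 - A*t))"
          unfolding a b Dm_def using s0 by (simp add: mult_ac)
        also have "\<dots> = (fps_X^(2*n+1) * fps_X^(1^2)) * ?W (2*n) * ((1 - A) * (1 - A*t))"
          unfolding IH[OF n1] by (simp only: mult_ac)
        also have "\<dots> = fps_X^(s^2) * ?W (2*n) * (B*t*(1-A)*(1-A*t))"
          unfolding ex by (simp only: mult_ac)
        finally show ?thesis .
      qed
    next
      case False
      then have s1: "s - 1 \<le> n" "1 \<le> s" using sn by simp_all
      have a: "?W (Suc n + s) = ?W (n + (s - 1)) * (1 - A) * (1 - A*t)"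
      proof -
        have e1: "Suc n + s = (n + (s-1)) + 2" using s1 by simp
        have e2: "2*(n + (s-1))+2 = 2*(n+s)" "2*(n+(s-1))+4 = 2*(n+s)+2" using s1 by simp_all
        show ?thesis unfolding e1 W_2 e2 A_def t_def power_add ..
      qed
      have b: "?W (Suc n - s) = ?W (n - (s-1))" using s1 by simp
      have ex: "fps_X^(2*n+1) * fps_X^((s-1)^2) = fps_X^(s^2) * B * t"
      proof -
        have "2*n+1 + (s-1)^2 = s^2 + 2*(n-s) + 2"
        proof -
          obtain r where r: "s = Suc r" using s1 by (cases s) auto
          show ?thesis using sn unfolding r by (simp add: power2_eq_square algebra_simps)
        qed
        then show ?thesis unfolding B_def t_def Xp by simp
      qed
      have "fps_X^(2*n+1) * Dm * ?W (Suc n + s) * ?W (Suc n - s)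
          = fps_X^(2*n+1) * (Dg n (s-1) * ?W (n + (s-1)) * ?W (n - (s-1))) * ((1 - A) * (1 - A*t))"
        unfolding a b Dm_def using False by (simp add: mult_ac)
      also have "\<dots> = (fps_X^(2*n+1) * fps_X^((s-1)^2)) * ?W (2*n) * ((1 - A) * (1 - A*t))"
        unfolding IH[OF s1(1)] by (simp only: mult_ac)
      also have "\<dots> = fps_X^(s^2) * ?W (2*n) * (B*t*(1-A)*(1-A*t))"
        unfolding ex by (simp only: mult_ac)
      finally show ?thesis .
    qed
    have rec: "Dg (Suc n) s = Dg n s * (1 + fps_X^(4*n+2)) + fps_X^(2*n+1) * (Dm + Dg n (s+1))"
      unfolding Dm_def by simp
    have "Dg (Suc n) s * ?W (Suc n + s) * ?W (Suc n - s)
        = Dg n s * (1 + fps_X^(4*n+2)) * ?W (Suc n + s) * ?W (Suc n - s)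
          + fps_X^(2*n+1) * Dm * ?W (Suc n + s) * ?W (Suc n - s)
          + fps_X^(2*n+1) * Dg n (s+1) * ?W (Suc n + s) * ?W (Suc n - s)"
      unfolding rec by (simp add: algebra_simps)
    also have "\<dots> = fps_X^(s^2) * ?W (2*n) * ((1 - A*t)*(1 - B*t)*(1 + A*B*t) + B*t*(1-A)*(1-A*t) + A*t*(1-B)*(1-B*t))"
      unfolding T1 T2 T3 by (simp add: algebra_simps)
    also have "\<dots> = fps_X^(s^2) * ?W (2 * Suc n)"
      unfolding poly_id hW by (simp only: mult_ac)
    finally show ?thesis .
  qed
qed


definition theta :: "rat fps" where
  "theta = Abs_fps (\<lambda>m. (if m = 0 then 1 else 0) + (\<Sum>s\<in>{1..m}. if m = s^2 then 2*(-1)^s else 0))"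

definition Th :: "nat \<Rightarrow> rat fps" where
  "Th n = 1 + (\<Sum>s\<in>{1..n}. fps_const (2*(-1)^s) * fps_X^(s^2))"

lemma Th_nth: assumes "m \<le> n" shows "Th n $ m = theta $ m"
proof -
  have "Th n $ m = (if m = 0 then 1 else 0) + (\<Sum>s\<in>{1..n}. if m = s^2 then 2*(-1)^s else 0)"
    unfolding Th_def by (simp add: fps_sum_nth) (intro sum.cong refl, simp)
  also have "(\<Sum>s\<in>{1..n}. if m = s^2 then 2*(-1)^s else (0::rat)) = (\<Sum>s\<in>{1..m}. if m = s^2 then 2*(-1)^s else 0)"
  proof (rule sum.mono_neutral_right)
    show "\<forall>i\<in>{1..n} - {1..m}. (if m = i^2 then 2*(-1)^i else (0::rat)) = 0"
    proof
      fix i assume "i \<in> {1..n} - {1..m}"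
      then have "m < i" by auto
      moreover have "i \<le> i^2" by (simp add: power2_eq_square)
      ultimately show "(if m = i^2 then 2*(-1)^i else (0::rat)) = 0" by auto
    qed
  qed (use assms in auto)
  finally show ?thesis by (simp add: theta_def)
qed

lemma eqm_Th: "N \<le> n \<Longrightarrow> eqm N (Th n) theta"
  using Th_nth by (auto simp: eqm_def)

lemma Sg_alt: "Sg n = Dg n 0 + (\<Sum>s\<in>{1..n}. fps_const (2*(-1)^s) * Dg n s)"
proof -
  have "2 * Tg n = (\<Sum>s\<in>{1..n}. fps_const (2*(-1)^s) * Dg n s)"
    unfolding Tg_def sum_distrib_left
  proof (intro sum.cong refl)
    fix s
    have "fps_const (2*(-1)^s :: rat) = 2 * cs s"
      unfolding cs_def fps_const_mult[symmetric] numeral_fps_const ..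
    then show "2 * (cs s * Dg n s) = fps_const (2*(-1)^s) * Dg n s" by (simp only: mult.assoc)
  qed
  then show ?thesis unfolding Sg_def by simp
qed

lemma PP2_unit: "PP 2 t $ 0 = 1" by (rule PP_nth0) simp

lemma per_term:
  assumes "s \<le> 2*N"
  shows "eqm N (Dg (2*N) s * eta_f 2 ^ 2) (fps_X^(s^2) * eta_f 2)"
proof (cases "s \<le> N")
  case True
  let ?n = "2*N"
  have "eqm N (Dg ?n s * eta_f 2 ^ 2) (Dg ?n s * PP 2 (?n+s) * PP 2 (?n-s))"
    unfolding power2_eq_square mult.assoc
    by (intro eqm_mult eqm_refl eta_eqm) (use True in auto)
  also have "Dg ?n s * PP 2 (?n+s) * PP 2 (?n-s) = fps_X^(s^2) * PP 2 (2*?n)"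
    by (rule closed_form) (use assms in simp)
  also have "eqm N (fps_X^(s^2) * PP 2 (2*?n)) (fps_X^(s^2) * eta_f 2)"
    by (intro eqm_mult eqm_refl eqm_sym[OF eta_eqm]) auto
  finally show ?thesis .
next
  case False
  let ?n = "2*N"
  let ?U = "PP 2 (?n+s) * PP 2 (?n-s)"
  have U0: "?U $ 0 \<noteq> 0" by (simp add: PP2_unit)
  have "Dg ?n s = Dg ?n s * ?U * inverse ?U" using inverse_mult_eq_1'[OF U0] by (simp add: mult.assoc)
  also have "Dg ?n s * ?U = fps_X^(s^2) * PP 2 (2*?n)"
    using closed_form[of s ?n] assms by (simp add: mult.assoc)
  finally have D: "Dg ?n s = fps_X^(s^2) * (PP 2 (2*?n) * inverse ?U)" by (simp add: mult.assoc)
  have Ns: "N < s^2"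
  proof -
    have "s \<le> s*s" by (rule le_square)
    then show ?thesis using False unfolding power2_eq_square by linarith
  qed
  have "eqm N (Dg ?n s * eta_f 2 ^ 2) 0"
    unfolding D mult.assoc by (rule eqm_Xpow[OF Ns])
  moreover have "eqm N (fps_X^(s^2) * eta_f 2) 0" by (rule eqm_Xpow[OF Ns])
  ultimately show ?thesis by (meson eqm_sym eqm_trans)
qed

theorem gauss: "eta_f 1 ^ 2 = theta * eta_f 2"
proof (rule eqm_all)
  fix N :: nat
  let ?n = "2*N"
  have "eqm N (eta_f 1 ^ 2) (PP 1 (2*?n) ^ 2)"
    by (intro eqm_power eta_eqm) auto
  also have "PP 1 (2*?n) ^ 2 = Sg ?n * PP 2 ?n ^ 2"
    unfolding Og_PP[symmetric] Sg_Og by (simp add: power_mult_distrib)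
  also have "eqm N (Sg ?n * PP 2 ?n ^ 2) (Sg ?n * eta_f 2 ^ 2)"
    by (intro eqm_mult eqm_refl eqm_power eqm_sym[OF eta_eqm]) auto
  also have "Sg ?n * eta_f 2 ^ 2 = Dg ?n 0 * eta_f 2 ^ 2 + (\<Sum>s\<in>{1..?n}. fps_const (2*(-1)^s) * (Dg ?n s * eta_f 2 ^ 2))"
    unfolding Sg_alt distrib_right sum_distrib_right by (simp only: mult.assoc)
  also have "eqm N \<dots> (fps_X^(0^2) * eta_f 2 + (\<Sum>s\<in>{1..?n}. fps_const (2*(-1)^s) * (fps_X^(s^2) * eta_f 2)))"
    by (intro eqm_add eqm_sum eqm_cmult per_term) auto
  also have "fps_X^(0^2) * eta_f 2 + (\<Sum>s\<in>{1..?n}. fps_const (2*(-1)^s) * (fps_X^(s^2) * eta_f 2)) = Th ?n * eta_f 2"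
    unfolding Th_def distrib_right sum_distrib_right by (simp add: mult.assoc)
  also have "eqm N (Th ?n * eta_f 2) (theta * eta_f 2)"
    by (intro eqm_mult eqm_refl eqm_Th) auto
  finally show "eqm N (eta_f 1 ^ 2) (theta * eta_f 2)" .
qed


definition dv :: "nat \<Rightarrow> rat \<Rightarrow> bool" where
  "dv e x \<longleftrightarrow> (\<exists>z::int. x = 2^e * of_int z)"

lemma dv_0[simp]: "dv e 0" unfolding dv_def by (intro exI[of _ 0]) simp
lemma dv_int: "dv 0 (of_int z)" unfolding dv_def by auto
lemma dv_add: "dv e x \<Longrightarrow> dv e y \<Longrightarrow> dv e (x + y)"
proof -
  assume "dv e x" "dv e y"
  then obtain z z' where "x = 2^e * of_int z" "y = 2^e * of_int z'" unfolding dv_def by auto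
  then have "x + y = 2^e * of_int (z + z')" by (simp add: algebra_simps)
  then show ?thesis unfolding dv_def by blast
qed
lemma dv_neg: "dv e x \<Longrightarrow> dv e (- x)"
proof -
  assume "dv e x"
  then obtain z where "x = 2^e * of_int z" unfolding dv_def by auto
  then have "- x = 2^e * of_int (- z)" by simp
  then show ?thesis unfolding dv_def by blast
qed
lemma dv_sum: "(\<And>i. i \<in> S \<Longrightarrow> dv e (f i)) \<Longrightarrow> dv e (\<Sum>i\<in>S. f i)"
  by (induction S rule: infinite_finite_induct) (auto intro: dv_add)
lemma dv_mult: "dv a x \<Longrightarrow> dv b y \<Longrightarrow> dv (a+b) (x * y)"
proof -
  assume "dv a x" "dv b y"
  then obtain z z' where "x = 2^a * of_int z" "y = 2^b * of_int z'" unfolding dv_def by auto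
  then have "x * y = 2^(a+b) * of_int (z * z')" by (simp add: power_add algebra_simps)
  then show ?thesis unfolding dv_def by blast
qed
lemma dv_mono: "e' \<le> e \<Longrightarrow> dv e x \<Longrightarrow> dv e' x"
proof -
  assume "e' \<le> e" "dv e x"
  then obtain z where z: "x = 2^e * of_int z" unfolding dv_def by auto
  have "x = 2^e' * of_int (2^(e-e') * z)"
    using \<open>e' \<le> e\<close> unfolding z by (simp add: power_add[symmetric])
  then show ?thesis unfolding dv_def by blast
qed
lemma dv_2: "dv e x \<Longrightarrow> dv (e+1) (2 * x)"
  using dv_mult[of 1 2 e x] unfolding dv_def by (auto intro: exI[of _ 1])

definition prof :: "rat fps \<Rightarrow> (nat \<Rightarrow> nat) \<Rightarrow> bool" where
  "prof F p \<longleftrightarrow> (\<forall>n. dv (p (n mod 4)) (F $ n))"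

lemma mod4_split: "(i mod 4 + (n - i) mod 4) mod 4 = n mod 4" if "i \<le> n" for i n :: nat
  using that by (metis le_add_diff_inverse mod_add_eq)

lemma prof_mult:
  assumes "prof F p" "prof G q" "\<And>s t. s < 4 \<Longrightarrow> t < 4 \<Longrightarrow> u ((s+t) mod 4) \<le> p s + q t"
  shows "prof (F*G) u"
  unfolding prof_def
proof
  fix n
  show "dv (u (n mod 4)) ((F*G) $ n)" unfolding fps_mult_nth
  proof (rule dv_sum)
    fix i assume "i \<in> {0..n}"
    then have "(i mod 4 + (n - i) mod 4) mod 4 = n mod 4" by (intro mod4_split) simp
    then have le: "u (n mod 4) \<le> p (i mod 4) + q ((n-i) mod 4)" using assms(3)[of "i mod 4" "(n-i) mod 4"] by simp
    have "dv (p (i mod 4) + q ((n-i) mod 4)) (F$i * G$(n-i))"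
      using assms(1,2) unfolding prof_def by (intro dv_mult) auto
    then show "dv (u (n mod 4)) (F$i * G$(n-i))" by (rule dv_mono[OF le])
  qed
qed

lemma prof_one: "p 0 = 0 \<Longrightarrow> prof 1 p"
  unfolding prof_def by (auto simp: dv_def intro: exI[of _ 1])

lemma prof_power:
  assumes "prof F p" "p 0 = 0" "\<And>s t. s < 4 \<Longrightarrow> t < 4 \<Longrightarrow> p ((s+t) mod 4) \<le> p s + p t"
  shows "prof (F ^ n) p"
proof (induction n)
  case 0 then show ?case using prof_one[of p] assms(2) by simp
next
  case (Suc n)
  then show ?case unfolding power_Suc by (rule prof_mult[OF assms(1)]) (use assms(3) in auto)
qed

lemma prof_mono: "prof F p \<Longrightarrow> (\<And>j. j < 4 \<Longrightarrow> q j \<le> p j) \<Longrightarrow> prof F q"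
  unfolding prof_def by (meson dv_mono mod_less_divisor zero_less_numeral)

definition sgl :: "rat fps \<Rightarrow> nat \<Rightarrow> nat \<Rightarrow> bool" where
  "sgl F c e \<longleftrightarrow> (\<forall>n. (n mod 4 \<noteq> c \<longrightarrow> F $ n = 0) \<and> dv e (F $ n))"

definition pj :: "rat fps \<Rightarrow> nat \<Rightarrow> rat fps" where
  "pj F j = Abs_fps (\<lambda>n. if n mod 4 = j then F $ n else 0)"

lemma sgl_pj: "prof F p \<Longrightarrow> sgl (pj F j) j (p j)"
  unfolding sgl_def pj_def prof_def by auto

lemma sgl_mult:
  assumes "sgl F s a" "sgl G t b"
  shows "sgl (F*G) ((s+t) mod 4) (a+b)"
  unfolding sgl_def
proof (intro allI conjI impI)
  fix n
  show "dv (a+b) ((F*G) $ n)" unfolding fps_mult_nth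
    using assms unfolding sgl_def by (intro dv_sum dv_mult) auto
  assume nc: "n mod 4 \<noteq> (s+t) mod 4"
  show "(F*G) $ n = 0" unfolding fps_mult_nth
  proof (rule sum.neutral, rule ballI)
    fix i assume "i \<in> {0..n}"
    then have m: "(i mod 4 + (n - i) mod 4) mod 4 = n mod 4" by (intro mod4_split) simp
    show "F$i * G$(n-i) = 0"
    proof (cases "i mod 4 = s \<and> (n-i) mod 4 = t")
      case True then show ?thesis using m nc by auto
    next
      case False then show ?thesis using assms unfolding sgl_def by auto
    qed
  qed
qed

lemma nth_2: "(2 * T :: rat fps) $ n = 2 * T $ n" by (simp add: numeral_fps_const)

lemma sgl_2: "sgl T c e \<Longrightarrow> sgl (2*T) c (e+1)"
  unfolding sgl_def nth_2 using dv_2[of e] by simp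

lemma sgl_mult': "sgl F s a \<Longrightarrow> sgl G t b \<Longrightarrow> c = (s+t) mod 4 \<Longrightarrow> sgl (F*G) c (a+b)"
  using sgl_mult by simp

lemma sgl_dv: "sgl T c e \<Longrightarrow> u c \<le> e \<Longrightarrow> dv (u (n mod 4)) (T $ n)"
  unfolding sgl_def by (cases "n mod 4 = c") (auto intro: dv_mono)

lemma decomp: "F = pj F 0 + pj F 1 + pj F 2 + pj F 3"
proof (rule fps_ext)
  fix n :: nat
  have "n mod 4 < 4" by simp
  then have "n mod 4 = 0 \<or> n mod 4 = 1 \<or> n mod 4 = 2 \<or> n mod 4 = 3" by linarith
  then show "F $ n = (pj F 0 + pj F 1 + pj F 2 + pj F 3) $ n" by (auto simp: pj_def)
qed

lemma prof_sq:
  assumes "prof F p"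
    "u 0 \<le> p 0 + p 0" "u 2 \<le> p 1 + p 1" "u 0 \<le> p 2 + p 2" "u 2 \<le> p 3 + p 3"
    "u 1 \<le> p 0 + p 1 + 1" "u 2 \<le> p 0 + p 2 + 1" "u 3 \<le> p 0 + p 3 + 1"
    "u 3 \<le> p 1 + p 2 + 1" "u 0 \<le> p 1 + p 3 + 1" "u 1 \<le> p 2 + p 3 + 1"
  shows "prof (F^2) u"
proof -
  define A where "A = pj F 0"
  define B where "B = pj F 1"
  define C where "C = pj F 2"
  define D where "D = pj F 3"
  have sA: "sgl A 0 (p 0)" and sB: "sgl B 1 (p 1)" and sC: "sgl C 2 (p 2)" and sD: "sgl D 3 (p 3)"
    unfolding A_def B_def C_def D_def using sgl_pj[OF assms(1)] by auto
  have F: "F^2 = A*A + B*B + C*C + D*D + 2*(A*B) + 2*(A*C) + 2*(A*D) + 2*(B*C) + 2*(B*D) + 2*(C*D)"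
    unfolding A_def B_def C_def D_def
    by (subst (1) decomp) (simp add: power2_eq_square algebra_simps)
  have t1: "sgl (A*A) 0 (p 0 + p 0)" by (rule sgl_mult'[OF sA sA]) simp
  have t2: "sgl (B*B) 2 (p 1 + p 1)" by (rule sgl_mult'[OF sB sB]) simp
  have t3: "sgl (C*C) 0 (p 2 + p 2)" by (rule sgl_mult'[OF sC sC]) simp
  have t4: "sgl (D*D) 2 (p 3 + p 3)" by (rule sgl_mult'[OF sD sD]) simp
  have "sgl (A*B) 1 (p 0 + p 1)" by (rule sgl_mult'[OF sA sB]) simp
  then have t5: "sgl (2*(A*B)) 1 (p 0 + p 1 + 1)" by (rule sgl_2)
  have "sgl (A*C) 2 (p 0 + p 2)" by (rule sgl_mult'[OF sA sC]) simp
  then have t6: "sgl (2*(A*C)) 2 (p 0 + p 2 + 1)" by (rule sgl_2)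
  have "sgl (A*D) 3 (p 0 + p 3)" by (rule sgl_mult'[OF sA sD]) simp
  then have t7: "sgl (2*(A*D)) 3 (p 0 + p 3 + 1)" by (rule sgl_2)
  have "sgl (B*C) 3 (p 1 + p 2)" by (rule sgl_mult'[OF sB sC]) simp
  then have t8: "sgl (2*(B*C)) 3 (p 1 + p 2 + 1)" by (rule sgl_2)
  have "sgl (B*D) 0 (p 1 + p 3)" by (rule sgl_mult'[OF sB sD]) simp
  then have t9: "sgl (2*(B*D)) 0 (p 1 + p 3 + 1)" by (rule sgl_2)
  have "sgl (C*D) 1 (p 2 + p 3)" by (rule sgl_mult'[OF sC sD]) simp
  then have t10: "sgl (2*(C*D)) 1 (p 2 + p 3 + 1)" by (rule sgl_2)
  show ?thesis unfolding prof_def F fps_add_nth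
    by (intro allI dv_add sgl_dv[OF t1] sgl_dv[OF t2] sgl_dv[OF t3] sgl_dv[OF t4] sgl_dv[OF t5]
        sgl_dv[OF t6] sgl_dv[OF t7] sgl_dv[OF t8] sgl_dv[OF t9] sgl_dv[OF t10] assms(2-))
qed

lemma prof_inverse:
  assumes F0: "F $ 0 = 1" and pF: "prof F p" and g0: "g 0 = 0"
    and cond: "\<And>s t. s < 4 \<Longrightarrow> t < 4 \<Longrightarrow> g ((s+t) mod 4) \<le> p s + g t"
  shows "prof (inverse F) g"
  unfolding prof_def
proof
  fix n
  show "dv (g (n mod 4)) (inverse F $ n)"
  proof (induction n rule: less_induct)
    case (less n)
    show ?case
    proof (cases "n = 0")
      case True then show ?thesis using F0 g0 by (simp add: dv_def exI[of _ 1])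
    next
      case False
      have FG: "F * inverse F = 1" using inverse_mult_eq_1'[of F] F0 by simp
      have "(F * inverse F) $ n = 0" using False by (simp add: FG)
      moreover have "(F * inverse F) $ n = F$0 * inverse F $ n + (\<Sum>i\<in>{Suc 0..n}. F$i * inverse F $ (n-i))"
        unfolding fps_mult_nth by (subst sum.atLeast_Suc_atMost) simp_all
      ultimately have eq: "inverse F $ n = - (\<Sum>i\<in>{Suc 0..n}. F$i * inverse F $ (n-i))"
        using F0 by (simp add: eq_neg_iff_add_eq_0)
      show ?thesis unfolding eq
      proof (intro dv_neg dv_sum)
        fix i assume i: "i \<in> {Suc 0..n}"
        then have m: "(i mod 4 + (n - i) mod 4) mod 4 = n mod 4" by (intro mod4_split) simp
        have le: "g (n mod 4) \<le> p (i mod 4) + g ((n-i) mod 4)" using cond[of "i mod 4" "(n-i) mod 4"] m by simp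
        have "dv (g ((n-i) mod 4)) (inverse F $ (n-i))" using i by (intro less.IH) auto
        then have "dv (p (i mod 4) + g ((n-i) mod 4)) (F$i * inverse F $ (n-i))"
          using pF unfolding prof_def by (intro dv_mult) auto
        then show "dv (g (n mod 4)) (F$i * inverse F $ (n-i))" by (rule dv_mono[OF le])
      qed
    qed
  qed
qed


abbreviation fpi where "fpi \<equiv> fps_pow_int"

lemma fpi_P: "fpi F e = F ^ nat e * inverse F ^ nat (- e)"
  by (simp add: fps_pow_int_def)

lemma P_cancel: fixes F :: "rat fps" assumes "F $ 0 \<noteq> 0"
  shows "F^(x+d) * inverse F ^ (y+d) = F^x * inverse F ^ y"
proof -
  have "F^(x+d) * inverse F ^ (y+d) = F^x * inverse F ^ y * (F * inverse F)^d"
    unfolding power_mult_distrib power_add by (simp only: mult_ac)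
  also have "F * inverse F = 1" using inverse_mult_eq_1'[OF assms] .
  finally show ?thesis by simp
qed

lemma fpi_add: assumes "F $ 0 \<noteq> 0" shows "fpi F (a+b) = fpi F a * fpi F b"
proof -
  define d where "d = nat a + nat b - nat (a+b)"
  have e1: "nat a + nat b = nat (a+b) + d" unfolding d_def by arith
  have e2: "nat (-a) + nat (-b) = nat (-(a+b)) + d" unfolding d_def by arith
  have "fpi F a * fpi F b = F^(nat a + nat b) * inverse F ^ (nat (-a) + nat (-b))"
    unfolding fpi_P by (simp add: power_add mult_ac)
  also have "\<dots> = fpi F (a+b)" unfolding e1 e2 P_cancel[OF assms] fpi_P ..
  finally show ?thesis ..
qed

lemma fpi_mult: "fpi (F*G) e = fpi F e * fpi G e"
  unfolding fpi_P by (simp add: fps_inverse_mult power_mult_distrib mult_ac)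

lemma fpi_nat: "fpi F (int n) = F ^ n" by (simp add: fps_pow_int_def)
lemma fpi_negnat: "fpi F (- int n) = inverse F ^ n" by (simp add: fps_pow_int_def)
lemma fpi_0[simp]: "(fpi F e) $ 0 \<noteq> 0" if "F $ 0 \<noteq> 0"
  using that by (simp add: fps_pow_int_def)

lemma fpi_pow: assumes "F $ 0 \<noteq> 0" shows "fpi (fpi F a) e = fpi F (a*e)"
proof (cases "a \<ge> 0")
  case True
  then obtain m where a: "a = int m" by (metis nonneg_eq_int)
  show ?thesis
  proof (cases "e \<ge> 0")
    case True
    then obtain n where "e = int n" by (metis nonneg_eq_int)
    then show ?thesis unfolding a by (simp add: fpi_nat power_mult[symmetric] flip: of_nat_mult)
  next
    case False
    then obtain n where "e = - int n" by (metis nonpos_int_cases not_le less_imp_le)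
    then show ?thesis unfolding a
      by (simp add: fpi_nat fpi_negnat fps_inverse_power power_mult[symmetric] flip: of_nat_mult)
  qed
next
  case False
  then obtain m where a: "a = - int m" by (metis nonpos_int_cases not_le less_imp_le)
  show ?thesis
  proof (cases "e \<ge> 0")
    case True
    then obtain n where "e = int n" by (metis nonneg_eq_int)
    then show ?thesis unfolding a
      by (simp add: fpi_nat fpi_negnat power_mult[symmetric] flip: of_nat_mult)
  next
    case False
    then obtain n where "e = - int n" by (metis nonpos_int_cases not_le less_imp_le)
    then show ?thesis unfolding a using assms
      by (simp add: fpi_nat fpi_negnat fps_inverse_power power_mult[symmetric] flip: of_nat_mult)
  qed
qed

lemma fpi_dil: assumes "F $ 0 \<noteq> 0" shows "fpi (dil F) e = dil (fpi F e)"
  unfolding fpi_P dil_mult dil_power dil_inverse[OF assms] ..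

lemma fpi_ngt: assumes "F $ 0 \<noteq> 0" shows "fpi (ngt F) e = ngt (fpi F e)"
  unfolding fpi_P ngt_mult ngt_power ngt_inverse[OF assms] ..


definition MM :: "int \<Rightarrow> int \<Rightarrow> int \<Rightarrow> rat fps" where
  "MM a b c = fpi (eta_f 1) a * fpi (eta_f 2) b * fpi (eta_f 4) c"

lemma eta_unit: "eta_f k $ 0 \<noteq> 0" by (simp add: eta_0)

lemma MM_mult: "MM a b c * MM a' b' c' = MM (a+a') (b+b') (c+c')"
  unfolding MM_def fpi_add[OF eta_unit] by (simp only: mult_ac)

lemma MM_unit: "MM a b c $ 0 \<noteq> 0"
  unfolding MM_def by (simp add: eta_unit)

lemma MM_pow: "fpi (MM a b c) e = MM (a*e) (b*e) (c*e)"
  unfolding MM_def fpi_mult fpi_pow[OF eta_unit] ..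

lemma fpi_1: "fpi F 1 = F" by (simp add: fps_pow_int_def)
lemma fpi_m1: "fpi F (-1) = inverse F" by (simp add: fps_pow_int_def)
lemma fpi_2: "fpi F 2 = F^2" by (simp add: fps_pow_int_def)
lemma fpi_3: "fpi F 3 = F^3" by (simp add: fps_pow_int_def)
lemma fpi_00: "fpi F 0 = 1" by (simp add: fps_pow_int_def)

lemma theta_M: "theta = MM 2 (-1) 0"
proof -
  have "theta = theta * eta_f 2 * inverse (eta_f 2)"
    using inverse_mult_eq_1'[OF eta_unit[of 2]] by (simp add: mult.assoc)
  also have "\<dots> = eta_f 1 ^ 2 * inverse (eta_f 2)" by (simp only: gauss)
  finally show ?thesis unfolding MM_def fpi_2 fpi_m1 fpi_00 by simp
qed

lemma theta_unit: "theta $ 0 \<noteq> 0" unfolding theta_M by (rule MM_unit)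

lemma ngtE1_M: "ngt (eta_f 1) = MM (-1) 3 (-1)"
proof -
  have u: "eta_f 1 * inverse (eta_f 1) = 1" "eta_f 4 * inverse (eta_f 4) = 1"
    using inverse_mult_eq_1'[OF eta_unit] by auto
  have "ngt (eta_f 1) = ngt (eta_f 1) * eta_f 1 * eta_f 4 * inverse (eta_f 1) * inverse (eta_f 4)"
    using u by (simp add: mult_ac)
  also have "\<dots> = eta_f 2 ^ 3 * inverse (eta_f 1) * inverse (eta_f 4)" by (simp only: eta_II)
  finally show ?thesis unfolding MM_def fpi_3 fpi_m1 by (simp add: mult_ac)
qed

lemma E2_dil: "eta_f 2 = dil (eta_f 1)" using dil_eta[of 1] by simp
lemma E4_dil: "eta_f 4 = dil (eta_f 2)" using dil_eta[of 2] by simp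

lemma ngt_theta: "ngt theta = MM (-2) 5 (-2)"
proof -
  have "ngt theta = ngt (MM 2 (-1) 0)" by (simp add: theta_M)
  also have "\<dots> = ngt (eta_f 1) ^ 2 * inverse (ngt (eta_f 2))"
    unfolding MM_def fpi_2 fpi_m1 fpi_00 by (simp add: ngt_mult ngt_power ngt_inverse eta_unit)
  also have "ngt (eta_f 2) = eta_f 2" unfolding E2_dil by (rule ngt_dil)
  also have "ngt (eta_f 1) ^ 2 * inverse (eta_f 2) = MM (-1) 3 (-1) * MM (-1) 3 (-1) * MM 0 (-1) 0"
    unfolding ngtE1_M power2_eq_square by (simp add: MM_def fpi_m1 fpi_00)
  also have "\<dots> = MM (-2) 5 (-2)" unfolding MM_mult by simp
  finally show ?thesis .
qed

lemma dil_theta: "dil theta = MM 0 2 (-1)"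
proof -
  have "dil theta = dil (MM 2 (-1) 0)" by (simp add: theta_M)
  also have "\<dots> = dil (eta_f 1) ^ 2 * inverse (dil (eta_f 2))"
    unfolding MM_def fpi_2 fpi_m1 fpi_00 by (simp add: dil_mult dil_power dil_inverse eta_unit)
  also have "\<dots> = MM 0 2 (-1)"
    unfolding E2_dil[symmetric] E4_dil[symmetric] by (simp add: MM_def fpi_2 fpi_m1 fpi_00)
  finally show ?thesis .
qed

lemma GF_identity:
  "fpi (eta_f 4) (c-1) * fpi (eta_f 1) (-2) * fpi (eta_f 2) (-(2*c-3))
    = ngt theta * dil (fpi theta (-(c+1)))"
proof -
  have eq: "dil (fpi theta (-(c+1))) = MM 0 (2*(-(c+1))) (-(-(c+1)))"
    unfolding fpi_dil[OF theta_unit, symmetric] dil_theta MM_pow by simp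
  have "ngt theta * dil (fpi theta (-(c+1))) = MM (-2) (3 - 2*c) (c-1)"
    unfolding ngt_theta eq MM_mult by (simp add: algebra_simps)
  then show ?thesis unfolding MM_def by (simp add: mult_ac algebra_simps)
qed


definition pr :: "nat \<Rightarrow> nat \<Rightarrow> nat \<Rightarrow> nat \<Rightarrow> nat" where
  "pr a b c j = (if j = 0 then 0 else if j = 1 then a else if j = 2 then b else c)"

lemma pr_simps[simp]: "pr a b c 0 = 0" "pr a b c 1 = a" "pr a b c 2 = b" "pr a b c 3 = c"
   "pr a b c (Suc 0) = a" "pr a b c (Suc (Suc 0)) = b" "pr a b c (Suc (Suc (Suc 0))) = c"
  by (simp_all add: pr_def)

lemma less4: "(s::nat) < 4 \<Longrightarrow> s = 0 \<or> s = 1 \<or> s = 2 \<or> s = 3" by linarith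

lemma sq_mod4: "(s::nat)^2 mod 4 = 0 \<or> s^2 mod 4 = 1"
proof (cases "even s")
  case True then obtain t where "s = 2*t" by auto
  then show ?thesis by (simp add: power2_eq_square)
next
  case False then obtain t where s: "s = 2*t+1" using oddE by blast
  have "s^2 = 4*(t*t+t) + 1" unfolding s by (simp add: power2_eq_square algebra_simps)
  then show ?thesis by simp
qed

lemma odd_sq_mod8: "odd (s::nat) \<Longrightarrow> s^2 mod 8 = 1"
proof -
  assume "odd s" then obtain t where s: "s = 2*t+1" using oddE by blast
  have "even (t*(t+1))" by simp
  then obtain u where u: "t*(t+1) = 2*u" by blast
  have "s^2 = 4*(t*(t+1)) + 1" unfolding s by (simp add: power2_eq_square algebra_simps)
  also have "\<dots> = 8*u + 1" unfolding u by simp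
  finally show ?thesis by simp
qed

lemma theta_nth: "theta $ m = (if m = 0 then 1 else 0) + (\<Sum>s\<in>{1..m}. if m = s^2 then 2*(-1)^s else 0)"
  by (simp add: theta_def)

lemma dv0_pm2: "dv 0 (2*(-1)^s)"
  unfolding dv_def by (rule exI[of _ "2*(-1)^s"]) simp

lemma dv1_pm2: "dv 1 (2*(-1)^s)"
  unfolding dv_def by (rule exI[of _ "(-1)^s"]) simp

lemma dv0_1: "dv 0 1"
  unfolding dv_def by (rule exI[of _ 1]) simp

lemma theta_prof: "prof theta (pr 1 K K)"
  unfolding prof_def
proof
  fix m :: nat
  have "m mod 4 < 4" by simp
  then have "m mod 4 = 0 \<or> m mod 4 = 1 \<or> m mod 4 = 2 \<or> m mod 4 = 3" by linarith
  then consider "m mod 4 = 0" | "m mod 4 = 1" | "m mod 4 = 2" | "m mod 4 = 3" by (elim disjE) auto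
  then show "dv (pr 1 K K (m mod 4)) (theta $ m)"
  proof cases
    case 1
    have t: "dv 0 (if m = s^2 then 2*(-1)^s else 0)" for s :: nat
      by (cases "m = s^2") (simp_all only: simp_thms if_True if_False dv0_pm2 dv_0)
    have h: "dv 0 (if m = 0 then 1 else 0)" by (cases "m = 0") (simp_all only: simp_thms if_True if_False dv0_1 dv_0)
    have "dv 0 (theta $ m)" unfolding theta_nth
      by (intro dv_add dv_sum h t)
    then show ?thesis using 1 by simp
  next
    case 2
    then have m0: "m \<noteq> 0" by auto
    have t: "dv 1 (if m = s^2 then 2*(-1)^s else 0)" for s :: nat
      by (cases "m = s^2") (simp_all only: simp_thms if_True if_False dv1_pm2 dv_0)
    have "dv 1 (theta $ m)" unfolding theta_nth using m0
      by (simp only: if_False add_0) (intro dv_sum t)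
    then show ?thesis using 2 by simp
  next
    case 3
    have ns: "m \<noteq> s^2" for s :: nat
    proof
      assume "m = s^2" then show False using sq_mod4[of s] 3 by simp
    qed
    have "(\<Sum>s\<in>{1..m}. if m = s^2 then 2*(-1)^s else (0::rat)) = 0"
      using ns by simp
    moreover have "m \<noteq> 0" using 3 by auto
    ultimately have "theta $ m = 0" unfolding theta_nth by simp
    then show ?thesis by simp
  next
    case 4
    have ns: "m \<noteq> s^2" for s :: nat
    proof
      assume "m = s^2" then show False using sq_mod4[of s] 4 by simp
    qed
    have "(\<Sum>s\<in>{1..m}. if m = s^2 then 2*(-1)^s else (0::rat)) = 0"
      using ns by simp
    moreover have "m \<noteq> 0" using 4 by auto
    ultimately have "theta $ m = 0" unfolding theta_nth by simp
    then show ?thesis by simp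
  qed
qed

lemma theta0: "theta $ 0 = 1" by (simp add: theta_nth)

lemma Ti_prof: "prof (inverse theta) (pr 1 2 3)"
  by (rule prof_inverse[OF theta0 theta_prof[of 3]]) (auto simp: pr_def dest!: less4)

definition HH :: "nat \<Rightarrow> rat fps" where "HH k = inverse theta ^ (2^(k-1))"

lemma HH2: "prof (HH 2) (pr 2 2 4)"
proof -
  have "HH 2 = (inverse theta)^2" by (simp add: HH_def)
  then show ?thesis using prof_sq[OF Ti_prof, of "pr 2 2 4"] by simp
qed

lemma HH_prof: "k \<ge> 2 \<Longrightarrow> prof (HH k) (pr k k (k+2))"
proof (induction k rule: dec_induct)
  case base then show ?case using HH2 by simp
next
  case (step k)
  have "HH (Suc k) = HH k ^ 2"
  proof -
    have "2^(Suc k - 1) = 2^(k-1) * (2::nat)" using step.hyps by (cases k) auto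
    then show ?thesis unfolding HH_def by (simp add: power_mult)
  qed
  then show ?case using prof_sq[OF step.IH, of "pr (Suc k) (Suc k) (Suc k + 2)"] step.hyps by simp
qed

lemma HH_pow_prof: "k \<ge> 2 \<Longrightarrow> prof (HH k ^ r) (pr k k (k+2))"
  by (rule prof_power[OF HH_prof]) (auto simp: pr_def dest!: less4)

lemma Ti_pow_prof: "prof (inverse theta ^ r) (pr 1 2 3)"
  by (rule prof_power[OF Ti_prof]) (auto simp: pr_def dest!: less4)

lemma theta_sq_prof: "K \<ge> 1 \<Longrightarrow> prof (theta ^ 2) (pr 2 2 K)"
  using prof_sq[OF theta_prof[of K], of "pr 2 2 K"] by simp

lemma class3: "prof F p \<Longrightarrow> e \<le> p 3 \<Longrightarrow> l mod 4 = 3 \<Longrightarrow> dv e (F $ l)"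
  unfolding prof_def by (metis dv_mono)

lemma R_prof:
  fixes k r :: nat and m :: int
  assumes k: "k \<ge> 1" and r: "r \<ge> 1"
    and m: "m = 2^(k-1) * int r \<or> m = 2^(k-1) * int r - 2"
    and l: "l mod 4 = 3"
  shows "dv (k+2) (fpi theta (-m) $ l)"
proof -
  have Tt: "inverse theta * theta = 1" using inverse_mult_eq_1[OF theta_unit] .
  consider (a) "m = 2^(k-1) * int r" | (b) "m = 2^(k-1) * int r - 2" using m by blast
  then show ?thesis
  proof cases
    case a
    then have "m = int (2^(k-1) * r)" by simp
    then have R: "fpi theta (-m) = inverse theta ^ (2^(k-1) * r)"
      by (simp only: fpi_negnat)
    show ?thesis
    proof (cases "k = 1")
      case True
      then show ?thesis unfolding R using class3[OF Ti_pow_prof _ l] by simp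
    next
      case False
      then have k2: "k \<ge> 2" using k by simp
      have "fpi theta (-m) = HH k ^ r" unfolding R HH_def by (simp add: power_mult)
      then show ?thesis using class3[OF HH_pow_prof[OF k2] _ l] by simp
    qed
  next
    case b
    show ?thesis
    proof (cases "k = 1")
      case k1: True
      show ?thesis
      proof (cases "r = 1")
        case True
        then have "-m = 1" using b k1 by simp
        then have "fpi theta (-m) = theta" by (simp only: fpi_1)
        then show ?thesis using class3[OF theta_prof[of 3] _ l] k1 by simp
      next
        case False
        then have "m = int (r - 2)" using b k1 r by simp
        then have "fpi theta (-m) = inverse theta ^ (r - 2)" by (simp only: fpi_negnat)
        then show ?thesis using class3[OF Ti_pow_prof _ l] k1 by simp
      qed
    next
      case False
      then have k2: "k \<ge> 2" using k by simp
      define N where "N = 2^(k-1) * r"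
      have N2: "N \<ge> 2"
      proof -
        have "(2::nat) ^ 1 \<le> 2^(k-1)" using k2 by (intro power_increasing) auto
        then have "(2::nat) \<le> 2^(k-1)" by simp
        moreover have "2^(k-1) \<le> 2^(k-1) * r" using r by simp
        ultimately show ?thesis unfolding N_def by linarith
      qed
      have "m = int N - 2" unfolding N_def b by simp
      also have "\<dots> = int (N - 2)" using N2 by simp
      finally have mN: "m = int (N - 2)" .
      have R: "fpi theta (-m) = inverse theta ^ (N - 2)"
        unfolding mN by (simp only: fpi_negnat)
      have "HH k ^ r * theta ^ 2 = inverse theta ^ (N - 2) * (inverse theta * theta)^2"
      proof -
        have "HH k ^ r = inverse theta ^ N" unfolding HH_def N_def by (simp add: power_mult)
        also have "N = (N - 2) + 2" using N2 by simp
        finally show ?thesis by (simp only: power_add power_mult_distrib mult_ac)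
      qed
      then have "fpi theta (-m) = HH k ^ r * theta ^ 2" unfolding R Tt by simp
      moreover have "prof (HH k ^ r * theta ^ 2) (pr 0 0 (k+2))"
        by (rule prof_mult[OF HH_pow_prof[OF k2] theta_sq_prof[of "k+2"]])
           (use k2 in \<open>auto simp: pr_def dest!: less4\<close>)
      ultimately show ?thesis using class3[OF _ _ l] by simp
    qed
  qed
qed


lemma q_mod: fixes i n :: nat assumes "i mod 8 = 1" "i \<le> 8*n+7" shows "((8*n+7-i) div 2) mod 4 = 3"
  using assms by presburger

lemma coeff_dv:
  assumes HR: "\<And>l. l mod 4 = 3 \<Longrightarrow> dv e (R $ l)"
  shows "dv (e+1) ((ngt theta * dil R) $ (8*n+7))"
  unfolding fps_mult_nth
proof (rule dv_sum)
  fix i assume i: "i \<in> {0..8*n+7}"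
  show "dv (e+1) (ngt theta $ i * dil R $ (8*n+7-i))"
  proof (cases "even i")
    case True
    then have "odd (8*n+7-i)" using i by auto
    then show ?thesis by (simp add: dil_nth)
  next
    case False
    define q where "q = (8*n+7-i) div 2"
    have ev: "even (8*n+7-i)" using False i by auto
    have i0: "i \<noteq> 0"
    proof
      assume "i = 0" then show False using False by simp
    qed
    have "ngt theta $ i * dil R $ (8*n+7-i) = - (theta $ i * R $ q)"
      using False ev unfolding q_def by (simp add: ngt_nth dil_nth)
    also have "theta $ i * R $ q = (\<Sum>s\<in>{1..i}. if i = s^2 then 2*(-1)^s * R $ q else 0)"
      unfolding theta_nth using i0 by (simp add: sum_distrib_right) (intro sum.cong refl, simp)
    finally have eq: "ngt theta $ i * dil R $ (8*n+7-i) = - (\<Sum>s\<in>{1..i}. if i = s^2 then 2*(-1)^s * R $ q else 0)" .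
    show ?thesis unfolding eq
    proof (intro dv_neg dv_sum)
      fix s assume "s \<in> {1..i}"
      show "dv (e+1) (if i = s^2 then 2*(-1)^s * R $ q else 0)"
      proof (cases "i = s^2")
        case True
        then have "odd s" using False by auto
        then have "i mod 8 = 1" using odd_sq_mod8 True by simp
        then have "q mod 4 = 3" unfolding q_def using i by (intro q_mod) auto
        then have "dv e (R $ q)" by (rule HR)
        then have "dv (1+e) (2*(-1)^s * R $ q)" by (intro dv_mult dv1_pm2)
        then show ?thesis using True by (simp add: add.commute)
      qed simp
    qed
  qed
qed

lemma abar_GF: "abar c m = (ngt theta * dil (fpi theta (-(c+1)))) $ m"
  unfolding abar_def GF_identity ..

lemma main_dv:
  fixes k r :: nat and c :: int
  assumes "k \<ge> 1" "r \<ge> 1" "c + 1 = 2^(k-1) * int r \<or> c + 1 = 2^(k-1) * int r - 2"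
  shows "dv (k+3) (abar c (8*n+7))"
proof -
  have e: "k+3 = (k+2)+1" by simp
  show ?thesis unfolding abar_GF e
    by (rule coeff_dv) (rule R_prof[OF assms])
qed

lemma dv_exists: "dv e x \<Longrightarrow> \<exists>m::int. x = of_int (2^e * m)"
  unfolding dv_def by auto

theorem theorem1p8:
  fixes n k i :: nat
  assumes "k \<ge> 1"
  shows "(\<exists>m::int. abar (2 ^ k * int i + (2 ^ k - 6) div 2) (8 * n + 7) = of_int (2 ^ (k + 3) * m))
       \<and> (\<exists>m::int. abar (2 ^ k * int i + (2 ^ k - 2) div 2) (8 * n + 7) = of_int (2 ^ (k + 3) * m))"
proof -
  define r where "r = 2*i+1"
  have r1: "r \<ge> 1" unfolding r_def by simp
  have pk: "(2::int)^k = 2 * 2^(k-1)" using assms by (cases k) auto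
  have c1: "(2 ^ k * int i + (2 ^ k - 6) div 2) + 1 = 2^(k-1) * int r - 2"
  proof -
    have "(2 ^ k - 6) div 2 = (2::int)^(k-1) - 3" unfolding pk by simp
    then show ?thesis unfolding r_def pk by (simp add: algebra_simps)
  qed
  have c2: "(2 ^ k * int i + (2 ^ k - 2) div 2) + 1 = 2^(k-1) * int r"
  proof -
    have "(2 ^ k - 2) div 2 = (2::int)^(k-1) - 1" unfolding pk by simp
    then show ?thesis unfolding r_def pk by (simp add: algebra_simps)
  qed
  show ?thesis
    using dv_exists[OF main_dv[OF assms r1, of "2 ^ k * int i + (2 ^ k - 6) div 2" n]]
          dv_exists[OF main_dv[OF assms r1, of "2 ^ k * int i + (2 ^ k - 2) div 2" n]]
          c1 c2 by auto
qed


end
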